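(* Let $\{x_k\}$ be the random sequence generated by the GSKM algorithm. Take $-1 < \xi \leq 0$ and $0 < \delta < \frac{2(1+\xi)}{1-2\xi}$. Define $\bar{x}_k = \frac{1}{k}\sum_{l=1}^{k} x_l$. Then $$\mathbb{E}[f(\bar{x}_k)] \leq \frac{(1+\xi)(1+\xi-2\delta\xi\mu_2)\, d(x_0,P)^2 + 2\xi\delta(\delta\xi-\delta-1) f(x_0)}{2\delta k(2+2\xi+2\delta\xi-\delta)}.$$
   Context: Linear feasibility problem $Ax \leq b$ with $A \in \mathbb{R}^{m\times n}$, $b \in \mathbb{R}^m$, assumed consistent, with rows $a_i^T$ normalized ($\|a_i\|=1$). $P = \{x : Ax \leq b\}$, $\mathcal{P}(x)$ the Euclidean projection onto $P$, $d(x,P) = \|x-\mathcal{P}(x)\|$. Sampling: at each iteration a set $\tau$ of $\beta$ rows is chosen uniformly at random among all $\binom{m}{\beta}$ subsets and $i^* = \arg\max_{i\in\tau}(a_i^Tx-b_i)^+$; $\mathbb{E}_{\mathbb{S}}$ denotes expectation over this sampling. $f(x) = \mathbb{E}_{\mathbb{S}}\big[\tfrac12|(a_{i^*}^Tx-b_{i^*})^+|^2\big]$. $\mu_2 = \min\{1, \frac{\beta}{m}\lambda_{\max}(A^TA)\}$. GSKM algorithm: $x_1 = x_0$, $z_1 = z_0$; for $k\ge1$, $z_k = x_k - \delta(a_{i^*}^Tx_k-b_{i^*})^+a_{i^*}$ (with $i^*$ chosen by the sampling rule at $x_k$) and $x_{k+1} = (1-\xi)z_k + \xi z_{k-1}$.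 *)

theory Defs
  imports "HOL-Analysis.Analysis" "HOL-Probability.Probability"
begin

text \<open>Rows a_0,...,a_(m-1) of A (vectors in R^n), right-hand side b.\<close>

definition feasible_set :: "nat \<Rightarrow> (nat \<Rightarrow> real^'n) \<Rightarrow> (nat \<Rightarrow> real) \<Rightarrow> (real^'n) set" where
  "feasible_set m a b = {x. \<forall>i<m. a i \<bullet> x \<le> b i}"

definition resid :: "(nat \<Rightarrow> real^'n) \<Rightarrow> (nat \<Rightarrow> real) \<Rightarrow> real^'n \<Rightarrow> nat \<Rightarrow> real" where
  "resid a b x i = max (a i \<bullet> x - b i) 0"

definition row_subsets :: "nat \<Rightarrow> nat \<Rightarrow> nat set set" where
  "row_subsets m \<beta> = {\<tau>. \<tau> \<subseteq> {..<m} \<and> card \<tau> = \<beta>}"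

definition istar :: "(nat \<Rightarrow> real^'n) \<Rightarrow> (nat \<Rightarrow> real) \<Rightarrow> real^'n \<Rightarrow> nat set \<Rightarrow> nat" where
  "istar a b x \<tau> = (LEAST i. i \<in> \<tau> \<and> (\<forall>j\<in>\<tau>. resid a b x j \<le> resid a b x i))"

definition f_obj :: "nat \<Rightarrow> nat \<Rightarrow> (nat \<Rightarrow> real^'n) \<Rightarrow> (nat \<Rightarrow> real) \<Rightarrow> real^'n \<Rightarrow> real" where
  "f_obj m \<beta> a b x = measure_pmf.expectation (pmf_of_set (row_subsets m \<beta>))
      (\<lambda>\<tau>. (1/2) * (resid a b x (istar a b x \<tau>))\<^sup>2)"

text \<open>A^T A = sum_i a_i a_i^T.\<close>
definition gram :: "nat \<Rightarrow> (nat \<Rightarrow> real^'n) \<Rightarrow> real^'n^'n" where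
  "gram m a = (\<chi> i j. \<Sum>l<m. a l $ i * a l $ j)"

definition lambda_max :: "real^'n^'n \<Rightarrow> real" where
  "lambda_max M = Max {c. \<exists>v. v \<noteq> 0 \<and> M *v v = c *\<^sub>R v}"

definition mu2 :: "nat \<Rightarrow> nat \<Rightarrow> (nat \<Rightarrow> real^'n) \<Rightarrow> real" where
  "mu2 m \<beta> a = min 1 (real \<beta> / real m * lambda_max (gram m a))"

text \<open>One GSKM step. State (x_k, z_{k-1}); with sampled set tau:
  z_k = x_k - delta (a_{i*}^T x_k - b_{i*})^+ a_{i*},  x_{k+1} = (1-xi) z_k + xi z_{k-1}.
  New state (x_{k+1}, z_k).\<close>
definition gskm_step :: "(nat \<Rightarrow> real^'n) \<Rightarrow> (nat \<Rightarrow> real) \<Rightarrow> real \<Rightarrow> real \<Rightarrow>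
    ((real^'n) \<times> (real^'n)) \<Rightarrow> nat set \<Rightarrow> ((real^'n) \<times> (real^'n))" where
  "gskm_step a b \<delta> \<xi> st \<tau> =
     (let x = fst st; zprev = snd st; i = istar a b x \<tau>;
          z = x - (\<delta> * resid a b x i) *\<^sub>R a i
      in ((1 - \<xi>) *\<^sub>R z + \<xi> *\<^sub>R zprev, z))"

text \<open>x_l given the list of sampled sets ts = [tau_1, tau_2, ...]: x_1 = x_0, z_0 = x_0,
  and x_l is obtained after the first l-1 steps.\<close>
definition gskm_x :: "(nat \<Rightarrow> real^'n) \<Rightarrow> (nat \<Rightarrow> real) \<Rightarrow> real \<Rightarrow> real \<Rightarrow> real^'n \<Rightarrow>
    nat set list \<Rightarrow> nat \<Rightarrow> real^'n" where
  "gskm_x a b \<delta> \<xi> x0 ts l = fst (foldl (gskm_step a b \<delta> \<xi>) (x0, x0) (take (l - 1) ts))"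

text \<open>Sample space for the first n iterations: i.i.d. uniform choices of beta-subsets.\<close>
definition choice_lists :: "nat \<Rightarrow> nat \<Rightarrow> nat \<Rightarrow> nat set list set" where
  "choice_lists m \<beta> n = {ts. length ts = n \<and> set ts \<subseteq> row_subsets m \<beta>}"

end

theory Submission
  imports Defs
begin


lemma gram_mulv: "gram m a *v v = (\<Sum>l<m. (a l \<bullet> v) *\<^sub>R a l)"
proof -
  have "(gram m a *v v) $ i = (\<Sum>l<m. (a l \<bullet> v) *\<^sub>R a l) $ i" for i
  proof -
    have "(gram m a *v v) $ i = (\<Sum>j\<in>UNIV. (\<Sum>l<m. a l $ i * a l $ j) * v $ j)"
      by (simp add: matrix_vector_mult_def gram_def)
    also have "\<dots> = (\<Sum>l<m. \<Sum>j\<in>UNIV. a l $ i * (a l $ j * v $ j))"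
      by (simp add: sum_distrib_right sum.swap[of _ UNIV] mult.assoc)
    also have "\<dots> = (\<Sum>l<m. (a l \<bullet> v) * a l $ i)"
      by (simp add: inner_vec_def sum_distrib_left mult.commute)
    finally show ?thesis by (simp add: sum_component)
  qed
  then show ?thesis by (simp add: vec_eq_iff)
qed

lemma gram_inner: "(gram m a *v v) \<bullet> w = (\<Sum>l<m. (a l \<bullet> v) * (a l \<bullet> w))"
  by (simp add: gram_mulv inner_sum_left)

definition eigs :: "real^'n^'n \<Rightarrow> real set" where
  "eigs M = {c. \<exists>v. v \<noteq> 0 \<and> M *v v = c *\<^sub>R v}"

lemma eigs_finite:
  fixes a :: "nat \<Rightarrow> real^'n"
  shows "finite (eigs (gram m a))"
proof -
  let ?M = "gram m a"
  define ev where "ev c = (SOME v. v \<noteq> 0 \<and> ?M *v v = c *\<^sub>R v)" for c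
  have ev: "ev c \<noteq> 0 \<and> ?M *v ev c = c *\<^sub>R ev c" if "c \<in> eigs ?M" for c
  proof -
    have "\<exists>v. v \<noteq> 0 \<and> ?M *v v = c *\<^sub>R v" using that by (simp add: eigs_def)
    then show ?thesis unfolding ev_def by (rule someI_ex)
  qed
  have orth: "ev c \<bullet> ev d = 0" if "c \<in> eigs ?M" "d \<in> eigs ?M" "c \<noteq> d" for c d
  proof -
    have "c * (ev c \<bullet> ev d) = (?M *v ev c) \<bullet> ev d" using ev[OF that(1)] by simp
    also have "\<dots> = (?M *v ev d) \<bullet> ev c" by (simp add: gram_inner mult.commute)
    also have "\<dots> = d * (ev c \<bullet> ev d)" using ev[OF that(2)] by (simp add: inner_commute)
    finally show ?thesis using that(3) by simp
  qed
  have inj: "inj_on ev (eigs ?M)"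
  proof (rule inj_onI)
    fix c d assume "c \<in> eigs ?M" "d \<in> eigs ?M" "ev c = ev d"
    then show "c = d" using orth[of c d] ev[of c] by (metis inner_eq_zero_iff)
  qed
  have "pairwise orthogonal (ev ` eigs ?M)"
    unfolding pairwise_def orthogonal_def using orth by auto
  moreover have "0 \<notin> ev ` eigs ?M" using ev by auto
  ultimately have "independent (ev ` eigs ?M)" by (rule pairwise_orthogonal_independent)
  then have "finite (ev ` eigs ?M)" using independent_bound by blast
  then show ?thesis using inj finite_imageD by blast
qed

lemma real_quad_zero:
  fixes X K :: real
  assumes "X \<ge> 0" "\<And>t. t > 0 \<Longrightarrow> 2 * t * X \<le> t^2 * K"
  shows "X = 0"
proof (rule ccontr)
  assume "X \<noteq> 0"
  then have X: "X > 0" using assms(1) by simp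
  define t where "t = X / (\<bar>K\<bar> + 1)"
  have t: "t > 0" using X by (simp add: t_def)
  have "2 * t * X \<le> t^2 * K" using assms(2)[OF t] .
  then have "2 * X \<le> t * K" using t by (simp add: power2_eq_square)
  also have "\<dots> \<le> t * \<bar>K\<bar>" using t by (simp add: mult_left_mono)
  also have "\<dots> < X" using X by (simp add: t_def field_simps)
  finally show False using X by simp
qed

lemma eigs_nonneg_elem:
  fixes a :: "nat \<Rightarrow> real^'n"
  shows "\<exists>c\<in>eigs (gram m a). c \<ge> 0"
proof -
  let ?M = "gram m a"
  define Q where "Q v = (\<Sum>l<m. (a l \<bullet> v)^2)" for v :: "real^'n"
  have Qi: "Q v = (?M *v v) \<bullet> v" for v by (simp add: Q_def gram_inner power2_eq_square)
  have "continuous_on (sphere 0 1) Q" unfolding Q_def by (intro continuous_intros)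
  moreover have "sphere (0::real^'n) 1 \<noteq> {}"
    using norm_axis_1[of undefined] by (metis mem_sphere_0 empty_iff)
  ultimately obtain v0 where v0: "v0 \<in> sphere 0 1" "\<And>y. y \<in> sphere 0 1 \<Longrightarrow> Q y \<le> Q v0"
    using continuous_attains_sup[OF compact_sphere] by blast
  define c where "c = Q v0"
  have nv0: "norm v0 = 1" using v0 by simp
  have Qhom: "Q (r *\<^sub>R v) = r^2 * Q v" for r v
    by (simp add: Q_def sum_distrib_left power_mult_distrib)
  have Qle: "Q v \<le> c * (norm v)^2" for v
  proof (cases "v = 0")
    case True then show ?thesis by (simp add: Q_def)
  next
    case False
    then have "(inverse (norm v)) *\<^sub>R v \<in> sphere 0 1" by simp
    then have "Q ((inverse (norm v)) *\<^sub>R v) \<le> c" using v0 c_def by blast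
    then have "(inverse (norm v))^2 * Q v \<le> c" by (simp add: Qhom)
    then show ?thesis using False by (simp add: field_simps power2_eq_square)
  qed
  define u where "u = ?M *v v0 - c *\<^sub>R v0"
  have cv0: "(?M *v v0) \<bullet> v0 = c" using Qi c_def by simp
  have key: "2 * t * (u \<bullet> u) \<le> t^2 * (c * (u \<bullet> u) - Q u)" if "t > 0" for t
  proof -
    have "Q (v0 + t *\<^sub>R u) \<le> c * (norm (v0 + t *\<^sub>R u))^2" by (rule Qle)
    moreover have "Q (v0 + t *\<^sub>R u) = c + 2 * t * ((?M *v v0) \<bullet> u) + t^2 * Q u"
      by (simp add: Qi matrix_vector_right_distrib inner_add_left inner_add_right
          gram_inner power2_eq_square algebra_simps cv0[symmetric] sum.distrib sum_distrib_left)
    moreover have "(norm (v0 + t *\<^sub>R u))^2 = 1 + 2 * t * (v0 \<bullet> u) + t^2 * (u \<bullet> u)"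
    proof -
      have vv: "v0 \<bullet> v0 = 1" using nv0 power2_norm_eq_inner[of v0] by simp
      show ?thesis unfolding power2_norm_eq_inner
        by (simp add: inner_add_left inner_add_right vv power2_eq_square algebra_simps inner_commute)
    qed
    moreover have "(?M *v v0) \<bullet> u - c * (v0 \<bullet> u) = u \<bullet> u"
      by (simp add: u_def inner_diff_left)
    ultimately show ?thesis by (simp add: algebra_simps)
  qed
  have "u \<bullet> u = 0" by (rule real_quad_zero[OF inner_ge_zero key])
  then have "?M *v v0 = c *\<^sub>R v0" by (simp add: u_def)
  moreover have "v0 \<noteq> 0" using nv0 by auto
  moreover have "c \<ge> 0" by (simp add: c_def Q_def sum_nonneg)
  ultimately show ?thesis unfolding eigs_def by blast
qed

lemma lambda_max_nonneg:
  fixes a :: "nat \<Rightarrow> real^'n"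
  shows "lambda_max (gram m a) \<ge> 0"
proof -
  obtain c where "c \<in> eigs (gram m a)" "c \<ge> 0" using eigs_nonneg_elem by blast
  then have "c \<le> Max (eigs (gram m a))" using eigs_finite by (intro Max_ge)
  then show ?thesis using \<open>c \<ge> 0\<close> by (simp add: lambda_max_def eigs_def[symmetric])
qed

lemma mu2_nonneg:
  fixes a :: "nat \<Rightarrow> real^'n"
  shows "mu2 m \<beta> a \<ge> 0"
  unfolding mu2_def using lambda_max_nonneg[of m a] by simp



definition phi :: "(nat \<Rightarrow> real^'n) \<Rightarrow> (nat \<Rightarrow> real) \<Rightarrow> real^'n \<Rightarrow> nat set \<Rightarrow> real" where
  "phi a b x \<tau> = (1/2) * (resid a b x (istar a b x \<tau>))^2"

definition gv :: "(nat \<Rightarrow> real^'n) \<Rightarrow> (nat \<Rightarrow> real) \<Rightarrow> real^'n \<Rightarrow> nat set \<Rightarrow> real^'n" where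
  "gv a b x \<tau> = resid a b x (istar a b x \<tau>) *\<^sub>R a (istar a b x \<tau>)"

lemma resid_nonneg: "resid a b x i \<ge> 0" by (simp add: resid_def)

lemma phi_nonneg: "phi a b x \<tau> \<ge> 0" by (simp add: phi_def)

lemma istar_prop:
  assumes "finite \<tau>" "\<tau> \<noteq> {}"
  shows "istar a b x \<tau> \<in> \<tau> \<and> (\<forall>j\<in>\<tau>. resid a b x j \<le> resid a b x (istar a b x \<tau>))"
proof -
  let ?r = "resid a b x"
  have "Max (?r ` \<tau>) \<in> ?r ` \<tau>" using assms by (intro Max_in) auto
  then obtain i0 where i0: "i0 \<in> \<tau>" "?r i0 = Max (?r ` \<tau>)" by auto
  have "\<forall>j\<in>\<tau>. ?r j \<le> ?r i0" using i0 assms by auto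
  then have ex: "\<exists>i. i \<in> \<tau> \<and> (\<forall>j\<in>\<tau>. ?r j \<le> ?r i)" using i0 by blast
  show ?thesis unfolding istar_def by (rule LeastI_ex[OF ex])
qed

lemma sq_pos_part_sg:
  fixes s t :: real
  shows "(1/2) * (max t 0)^2 \<ge> (1/2) * (max s 0)^2 + max s 0 * (t - s)"
proof (cases "s \<le> 0")
  case True then show ?thesis by simp
next
  case False
  show ?thesis
  proof (cases "t \<le> 0")
    case True
    have "s * t \<le> 0" using False True by (simp add: mult_nonneg_nonpos)
    then show ?thesis using False True by (simp add: max_def power2_eq_square algebra_simps)
  next
    case tpos: False
    have "0 \<le> (t - s)^2" by simp
    then show ?thesis using False tpos by (simp add: max_def power2_eq_square algebra_simps)
  qed
qed

lemma phi_sg: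
  assumes "finite \<tau>" "\<tau> \<noteq> {}"
  shows "phi a b y \<tau> \<ge> phi a b x \<tau> + gv a b x \<tau> \<bullet> (y - x)"
proof -
  let ?i = "istar a b x \<tau>"
  have i: "?i \<in> \<tau>" using istar_prop[OF assms] by blast
  have "resid a b y ?i \<le> resid a b y (istar a b y \<tau>)"
    using istar_prop[OF assms, of a b y] i by blast
  then have "(resid a b y ?i)^2 \<le> (resid a b y (istar a b y \<tau>))^2"
    using resid_nonneg by (intro power_mono) auto
  then have 1: "(1/2) * (resid a b y ?i)^2 \<le> phi a b y \<tau>" by (simp add: phi_def)
  have 2: "(1/2) * (resid a b y ?i)^2 \<ge> (1/2) * (resid a b x ?i)^2
        + resid a b x ?i * ((a ?i \<bullet> y - b ?i) - (a ?i \<bullet> x - b ?i))"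
    unfolding resid_def by (rule sq_pos_part_sg)
  have 3: "gv a b x \<tau> \<bullet> (y - x) = resid a b x ?i * ((a ?i \<bullet> y - b ?i) - (a ?i \<bullet> x - b ?i))"
    by (simp add: gv_def inner_diff_right right_diff_distrib)
  show ?thesis using 1 2 3 by (simp add: phi_def)
qed

lemma gv_props:
  assumes "finite \<tau>" "\<tau> \<noteq> {}" "\<tau> \<subseteq> {..<m}" "\<forall>i<m. norm (a i) = 1"
    and "xs \<in> feasible_set m a b"
  shows "gv a b x \<tau> \<bullet> (x - xs) \<ge> 2 * phi a b x \<tau>"
    and "(norm (gv a b x \<tau>))^2 = 2 * phi a b x \<tau>"
proof -
  let ?i = "istar a b x \<tau>"
  have i: "?i < m" using istar_prop[OF assms(1,2)] assms(3) by blast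
  then have n1: "norm (a ?i) = 1" using assms(4) by blast
  have fx: "a ?i \<bullet> xs \<le> b ?i" using assms(5) i by (simp add: feasible_set_def)
  let ?R = "resid a b x ?i"
  have R0: "?R \<ge> 0" by (rule resid_nonneg)
  have "gv a b x \<tau> \<bullet> (x - xs) = ?R * (a ?i \<bullet> x - a ?i \<bullet> xs)"
    by (simp add: gv_def inner_diff_right right_diff_distrib)
  also have "\<dots> \<ge> ?R * (a ?i \<bullet> x - b ?i)" using fx R0 by (intro mult_left_mono) auto
  moreover have "?R * (a ?i \<bullet> x - b ?i) = ?R^2"
    by (simp add: resid_def max_def power2_eq_square)
  ultimately show "gv a b x \<tau> \<bullet> (x - xs) \<ge> 2 * phi a b x \<tau>" by (simp add: phi_def)
  show "(norm (gv a b x \<tau>))^2 = 2 * phi a b x \<tau>"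
    by (simp add: gv_def phi_def n1 power_mult_distrib)
qed

lemma jensen_phi:
  assumes "finite \<tau>" "\<tau> \<noteq> {}" "k \<ge> 1"
  shows "phi a b ((1 / real k) *\<^sub>R (\<Sum>l = 1..k. y l)) \<tau> \<le> (1 / real k) * (\<Sum>l = 1..k. phi a b (y l) \<tau>)"
proof -
  define c where "c = (1 / real k) *\<^sub>R (\<Sum>l = 1..k. y l)"
  have kc: "real k *\<^sub>R c = (\<Sum>l = 1..k. y l)" using assms(3) by (simp add: c_def)
  have "(\<Sum>l = 1..k. phi a b c \<tau> + gv a b c \<tau> \<bullet> (y l - c)) \<le> (\<Sum>l = 1..k. phi a b (y l) \<tau>)"
    by (intro sum_mono phi_sg assms)
  moreover have "(\<Sum>l = 1..k. phi a b c \<tau> + gv a b c \<tau> \<bullet> (y l - c)) = real k * phi a b c \<tau>"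
  proof -
    have "(\<Sum>l = 1..k. gv a b c \<tau> \<bullet> (y l - c)) = gv a b c \<tau> \<bullet> ((\<Sum>l = 1..k. y l) - real k *\<^sub>R c)"
    proof -
      have "(\<Sum>l = 1..k. c) = real k *\<^sub>R c" using sum_constant_scaleR[of c "{1..k}"] by simp
      then show ?thesis by (simp add: inner_sum_right[symmetric] sum_subtractf)
    qed
    then show ?thesis by (simp add: sum.distrib kc)
  qed
  ultimately have "real k * phi a b c \<tau> \<le> (\<Sum>l = 1..k. phi a b (y l) \<tau>)" by simp
  then show ?thesis using assms(3) by (simp add: c_def field_simps)
qed



lemma CL_finite:
  "finite (choice_lists m \<beta> n)"
proof -
  have fin: "finite (row_subsets m \<beta>)"
    unfolding row_subsets_def by (rule finite_subset[of _ "Pow {..<m}"]) auto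
  show ?thesis unfolding choice_lists_def using finite_lists_length_eq[OF fin, of n]
    by (simp add: conj_commute)
qed

lemma CL_card: "card (choice_lists m \<beta> n) = card (row_subsets m \<beta>) ^ n"
proof -
  have fin: "finite (row_subsets m \<beta>)"
    unfolding row_subsets_def by (rule finite_subset[of _ "Pow {..<m}"]) auto
  show ?thesis unfolding choice_lists_def using card_lists_length_eq[OF fin, of n]
    by (simp add: conj_commute)
qed

lemma sum_CL_append:
  "(\<Sum>ts\<in>choice_lists m \<beta> (p + q). F ts)
     = (\<Sum>u\<in>choice_lists m \<beta> p. \<Sum>v\<in>choice_lists m \<beta> q. F (u @ v))"
proof -
  let ?C = "choice_lists m \<beta>"
  have bij: "bij_betw (\<lambda>(u, v). u @ v) (?C p \<times> ?C q) (?C (p + q))"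
  proof (rule bij_betwI')
    fix x y assume xy: "x \<in> ?C p \<times> ?C q" "y \<in> ?C p \<times> ?C q"
    obtain u v u' v' where x: "x = (u, v)" and y: "y = (u', v')" by (cases x; cases y)
    have "length u = length u'" using xy x y by (simp add: choice_lists_def)
    then have "(u @ v = u' @ v') = (u = u' \<and> v = v')" by (simp add: append_eq_append_conv)
    then show "((case x of (u, v) \<Rightarrow> u @ v) = (case y of (u, v) \<Rightarrow> u @ v)) = (x = y)"
      using x y by simp
  next
    fix x assume x: "x \<in> ?C p \<times> ?C q"
    obtain u v where uv: "x = (u, v)" by (cases x)
    show "(case x of (u, v) \<Rightarrow> u @ v) \<in> ?C (p + q)"
      using x unfolding uv by (simp add: choice_lists_def)
  next
    fix ts assume ts: "ts \<in> ?C (p + q)"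
    then have "length ts = p + q" "set ts \<subseteq> row_subsets m \<beta>" by (auto simp: choice_lists_def)
    then have "(take p ts, drop p ts) \<in> ?C p \<times> ?C q"
      using set_take_subset[of p ts] set_drop_subset[of p ts] unfolding choice_lists_def
      by (simp only: mem_Times_iff mem_Collect_eq fst_conv snd_conv length_take length_drop) (auto simp del: set_take_subset set_drop_subset)
    moreover have "ts = (case (take p ts, drop p ts) of (u, v) \<Rightarrow> u @ v)" by simp
    ultimately show "\<exists>x\<in>?C p \<times> ?C q. ts = (case x of (u, v) \<Rightarrow> u @ v)" by blast
  qed
  have "(\<Sum>ts\<in>?C (p + q). F ts) = (\<Sum>x\<in>?C p \<times> ?C q. F (case x of (u, v) \<Rightarrow> u @ v))"
    using sum.reindex_bij_betw[OF bij, of F] by simp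
  also have "\<dots> = (\<Sum>u\<in>?C p. \<Sum>v\<in>?C q. F (u @ v))"
    by (simp add: sum.cartesian_product split_def)
  finally show ?thesis .
qed

lemma sum_CL_cons:
  "(\<Sum>ts\<in>choice_lists m \<beta> (Suc q). F ts)
     = (\<Sum>\<tau>\<in>row_subsets m \<beta>. \<Sum>v\<in>choice_lists m \<beta> q. F (\<tau> # v))"
proof -
  let ?C = "choice_lists m \<beta>" and ?S = "row_subsets m \<beta>"
  have bij: "bij_betw (\<lambda>(t, v). t # v) (?S \<times> ?C q) (?C (Suc q))"
  proof (rule bij_betwI')
    fix x y assume xy: "x \<in> ?S \<times> ?C q" "y \<in> ?S \<times> ?C q"
    obtain u v u' v' where x: "x = (u, v)" and y: "y = (u', v')" by (cases x; cases y)
    show "((case x of (t, v) \<Rightarrow> t # v) = (case y of (t, v) \<Rightarrow> t # v)) = (x = y)"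
      using x y by simp
  next
    fix x assume x: "x \<in> ?S \<times> ?C q"
    obtain u v where uv: "x = (u, v)" by (cases x)
    show "(case x of (t, v) \<Rightarrow> t # v) \<in> ?C (Suc q)"
      using x unfolding uv by (simp add: choice_lists_def)
  next
    fix ts assume ts: "ts \<in> ?C (Suc q)"
    then obtain t v where tv: "ts = t # v" by (cases ts) (auto simp: choice_lists_def)
    then have "(t, v) \<in> ?S \<times> ?C q" using ts by (simp add: choice_lists_def)
    moreover have "ts = (case (t, v) of (t, v) \<Rightarrow> t # v)" using tv by simp
    ultimately show "\<exists>x\<in>?S \<times> ?C q. ts = (case x of (t, v) \<Rightarrow> t # v)" by blast
  qed
  have "(\<Sum>ts\<in>?C (Suc q). F ts) = (\<Sum>x\<in>?S \<times> ?C q. F (case x of (t, v) \<Rightarrow> t # v))"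
    using sum.reindex_bij_betw[OF bij, of F] by simp
  also have "\<dots> = (\<Sum>t\<in>?S. \<Sum>v\<in>?C q. F (t # v))"
    by (simp add: sum.cartesian_product split_def)
  finally show ?thesis .
qed

lemma sum_CL_take:
  "(\<Sum>ts\<in>choice_lists m \<beta> (Suc n). G (take n ts))
     = real (card (row_subsets m \<beta>)) * (\<Sum>ts\<in>choice_lists m \<beta> n. G ts)"
proof -
  have "(\<Sum>ts\<in>choice_lists m \<beta> (n + 1). G (take n ts))
     = (\<Sum>u\<in>choice_lists m \<beta> n. \<Sum>v\<in>choice_lists m \<beta> 1. G (take n (u @ v)))"
    by (rule sum_CL_append)
  also have "\<dots> = (\<Sum>u\<in>choice_lists m \<beta> n. \<Sum>v\<in>choice_lists m \<beta> 1. G u)"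
  proof (rule sum.cong[OF refl], rule sum.cong[OF refl])
    fix u v assume "u \<in> choice_lists m \<beta> n"
    then have "length u = n" by (simp add: choice_lists_def)
    then show "G (take n (u @ v)) = G u" by simp
  qed
  also have "\<dots> = (\<Sum>u\<in>choice_lists m \<beta> n. real (card (choice_lists m \<beta> 1)) * G u)"
    by simp
  also have "\<dots> = real (card (row_subsets m \<beta>)) * (\<Sum>ts\<in>choice_lists m \<beta> n. G ts)"
    unfolding CL_card by (simp add: sum_distrib_left)
  finally show ?thesis by simp
qed

lemma sum_CL_ind:
  assumes "j < n" "\<beta> \<le> m"
  shows "(\<Sum>ts\<in>choice_lists m \<beta> n. P (ts ! j) (F (take j ts)))
     = (\<Sum>ts\<in>choice_lists m \<beta> n. (\<Sum>\<tau>\<in>row_subsets m \<beta>. P \<tau> (F (take j ts))) / real (card (row_subsets m \<beta>)))"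
proof -
  let ?C = "choice_lists m \<beta>" and ?S = "row_subsets m \<beta>"
  define q where "q = n - j - 1"
  have n: "n = j + Suc q" using assms(1) by (simp add: q_def)
  have "{..<\<beta>} \<in> ?S" using assms(2) by (auto simp: row_subsets_def)
  then have ne: "?S \<noteq> {}" by blast
  have finS: "finite ?S"
    unfolding row_subsets_def by (rule finite_subset[of _ "Pow {..<m}"]) auto
  have cS: "real (card ?S) > 0" using ne finS by (simp add: card_gt_0_iff)
  have "(\<Sum>ts\<in>?C n. P (ts ! j) (F (take j ts)))
      = (\<Sum>u\<in>?C j. \<Sum>v\<in>?C (Suc q). P ((u @ v) ! j) (F (take j (u @ v))))"
    unfolding n by (rule sum_CL_append)
  also have "\<dots> = (\<Sum>u\<in>?C j. \<Sum>v\<in>?C (Suc q). P (v ! 0) (F u))"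
  proof (rule sum.cong[OF refl], rule sum.cong[OF refl])
    fix u v assume "u \<in> ?C j"
    then have "length u = j" by (simp add: choice_lists_def)
    then show "P ((u @ v) ! j) (F (take j (u @ v))) = P (v ! 0) (F u)" by (simp add: nth_append)
  qed
  also have "\<dots> = (\<Sum>u\<in>?C j. \<Sum>t\<in>?S. \<Sum>w\<in>?C q. P ((t # w) ! 0) (F u))"
    by (simp only: sum_CL_cons)
  also have "\<dots> = (\<Sum>u\<in>?C j. real (card (?C q)) * (\<Sum>t\<in>?S. P t (F u)))"
    by (simp add: sum_distrib_left mult.commute)
  finally have L: "(\<Sum>ts\<in>?C n. P (ts ! j) (F (take j ts))) = \<dots>" .
  have "(\<Sum>ts\<in>?C n. (\<Sum>\<tau>\<in>?S. P \<tau> (F (take j ts))) / real (card ?S))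
      = (\<Sum>u\<in>?C j. \<Sum>v\<in>?C (Suc q). (\<Sum>\<tau>\<in>?S. P \<tau> (F (take j (u @ v)))) / real (card ?S))"
    unfolding n by (rule sum_CL_append)
  also have "\<dots> = (\<Sum>u\<in>?C j. \<Sum>v\<in>?C (Suc q). (\<Sum>\<tau>\<in>?S. P \<tau> (F u)) / real (card ?S))"
  proof (rule sum.cong[OF refl], rule sum.cong[OF refl])
    fix u v assume "u \<in> ?C j"
    then have "length u = j" by (simp add: choice_lists_def)
    then show "(\<Sum>\<tau>\<in>?S. P \<tau> (F (take j (u @ v)))) / real (card ?S) = (\<Sum>\<tau>\<in>?S. P \<tau> (F u)) / real (card ?S)" by simp
  qed
  also have "\<dots> = (\<Sum>u\<in>?C j. real (card (?C q)) * (\<Sum>t\<in>?S. P t (F u)))"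
  proof (rule sum.cong[OF refl])
    fix u
    have "real (card (?C (Suc q))) = real (card ?S) * real (card (?C q))" by (simp add: CL_card)
    then show "(\<Sum>v\<in>?C (Suc q). (\<Sum>\<tau>\<in>?S. P \<tau> (F u)) / real (card ?S)) = real (card (?C q)) * (\<Sum>t\<in>?S. P t (F u))"
      using cS by simp
  qed
  finally show ?thesis using L by simp
qed



lemma step_snd: "snd (gskm_step a b \<delta> \<xi> p \<tau>) = fst p - \<delta> *\<^sub>R gv a b (fst p) \<tau>"
  by (simp add: gskm_step_def gv_def Let_def)

lemma step_fst: "fst (gskm_step a b \<delta> \<xi> p \<tau>)
   = (1 - \<xi>) *\<^sub>R (fst p - \<delta> *\<^sub>R gv a b (fst p) \<tau>) + \<xi> *\<^sub>R snd p"
  by (simp add: gskm_step_def gv_def Let_def)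

lemma foldl_take_Suc: "j < length ts \<Longrightarrow> foldl f s (take (Suc j) ts) = f (foldl f s (take j ts)) (ts ! j)"
  by (simp add: take_Suc_conv_app_nth)

lemma S_props:
  assumes "\<tau> \<in> row_subsets m \<beta>" "1 \<le> \<beta>"
  shows "finite \<tau>" "\<tau> \<noteq> {}" "\<tau> \<subseteq> {..<m}"
proof -
  show f: "finite \<tau>" using assms(1) unfolding row_subsets_def by (auto intro: finite_subset)
  show "\<tau> \<noteq> {}" using assms unfolding row_subsets_def by auto
  show "\<tau> \<subseteq> {..<m}" using assms(1) unfolding row_subsets_def by auto
qed

lemma CL_nth: "ts \<in> choice_lists m \<beta> n \<Longrightarrow> i < n \<Longrightarrow> ts ! i \<in> row_subsets m \<beta>"
  unfolding choice_lists_def by (auto intro: nth_mem)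

lemma path:
  fixes a :: "nat \<Rightarrow> real^'n" and xs x0 :: "real^'n"
  assumes norm1: "\<forall>i<m. norm (a i) = 1" and fs: "xs \<in> feasible_set m a b"
    and xi: "-1 < \<xi>" "\<xi> \<le> 0" and dl: "0 < \<delta>" and b1: "1 \<le> \<beta>"
    and ts: "ts \<in> choice_lists m \<beta> n"
  defines "X \<equiv> \<lambda>i. fst (foldl (gskm_step a b \<delta> \<xi>) (x0, x0) (take i ts))"
    and "h \<equiv> \<lambda>i. phi a b (fst (foldl (gskm_step a b \<delta> \<xi>) (x0, x0) (take i ts))) (ts ! i)"
    and "q \<equiv> \<lambda>i. phi a b (fst (foldl (gskm_step a b \<delta> \<xi>) (x0, x0) (take (i - 1) ts))) (ts ! i)"
    and "W \<equiv> \<lambda>p. fst p + \<xi> *\<^sub>R snd p - (1 + \<xi>) *\<^sub>R xs"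
  shows "j \<le> n \<Longrightarrow> (norm (W (foldl (gskm_step a b \<delta> \<xi>) (x0, x0) (take j ts))))^2
     \<le> (1 + \<xi>)^2 * (norm (x0 - xs))^2 + (\<Sum>i<j. (2 * \<delta>^2 - 4 * \<delta> * (1 + \<xi>)) * h i)
       + 2 * \<delta> * \<xi> * (\<Sum>i\<in>{1..<j}. (1 - \<delta>) * h i - q i - \<delta> * h (i - 1))"
proof (induction j)
  case 0
  have "W (x0, x0) = (1 + \<xi>) *\<^sub>R (x0 - xs)" by (simp add: W_def algebra_simps)
  then show ?case by (simp add: power_mult_distrib)
next
  case (Suc j)
  let ?st = "\<lambda>i. foldl (gskm_step a b \<delta> \<xi>) (x0, x0) (take i ts)"
  have len: "length ts = n" using ts by (simp add: choice_lists_def)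
  have jn: "j < n" using Suc.prems by simp
  define p where "p = ?st j"
  define \<tau> where "\<tau> = ts ! j"
  have \<tau>S: "\<tau> \<in> row_subsets m \<beta>" using CL_nth[OF ts jn] by (simp add: \<tau>_def)
  note \<tau>p = S_props[OF \<tau>S b1]
  define g where "g = gv a b (X j) \<tau>"
  have fp: "fst p = X j" by (simp add: p_def X_def)
  have stS: "?st (Suc j) = gskm_step a b \<delta> \<xi> p \<tau>"
    using foldl_take_Suc[of j ts] jn len by (simp add: p_def \<tau>_def)
  have Wstep: "W (?st (Suc j)) = W p - \<delta> *\<^sub>R g"
    unfolding stS W_def step_fst step_snd g_def fp[symmetric]
    by (simp add: algebra_simps)
  have Wp: "W p = (1 + \<xi>) *\<^sub>R (X j - xs) - \<xi> *\<^sub>R (X j - snd p)"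
    unfolding W_def fp[symmetric] by (simp add: algebra_simps)
  have hj: "h j = phi a b (X j) \<tau>" by (simp add: h_def X_def \<tau>_def)
  have G1: "g \<bullet> (X j - xs) \<ge> 2 * h j"
    unfolding g_def hj by (rule gv_props(1)[OF \<tau>p norm1 fs])
  have G2: "(norm g)^2 = 2 * h j"
    unfolding g_def hj by (rule gv_props(2)[OF \<tau>p norm1 fs])
  define B where "B = (if j = 0 then 0 else (1 - \<delta>) * h j - q j - \<delta> * h (j - 1))"
  have E: "g \<bullet> (X j - snd p) \<ge> B"
  proof (cases j)
    case 0
    then have "snd p = X j" by (simp add: p_def X_def)
    then show ?thesis using 0 by (simp add: B_def)
  next
    case (Suc j')
    define p' where "p' = ?st j'"
    define \<tau>' where "\<tau>' = ts ! j'"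
    have j'n: "j' < n" using jn Suc by simp
    have \<tau>S': "\<tau>' \<in> row_subsets m \<beta>" using CL_nth[OF ts j'n] by (simp add: \<tau>'_def)
    note \<tau>p' = S_props[OF \<tau>S' b1]
    define g' where "g' = gv a b (X j') \<tau>'"
    have fp': "fst p' = X j'" by (simp add: p'_def X_def)
    have "p = gskm_step a b \<delta> \<xi> p' \<tau>'"
      using foldl_take_Suc[of j' ts] j'n len Suc by (simp add: p_def p'_def \<tau>'_def)
    then have sp: "snd p = X j' - \<delta> *\<^sub>R g'" by (simp add: step_snd fp' g'_def)
    have "phi a b (X j') \<tau> \<ge> phi a b (X j) \<tau> + g \<bullet> (X j' - X j)"
      unfolding g_def by (rule phi_sg[OF \<tau>p(1,2)])
    then have e1: "g \<bullet> (X j - X j') \<ge> h j - q j"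
      using Suc hj by (simp add: q_def X_def \<tau>_def inner_diff_right)
    have hj': "h j' = phi a b (X j') \<tau>'" by (simp add: h_def X_def \<tau>'_def)
    have G2': "(norm g')^2 = 2 * h j'"
      unfolding g'_def hj' by (rule gv_props(2)[OF \<tau>p' norm1 fs])
    have "0 \<le> (norm (g + g'))^2" by simp
    also have "\<dots> = (norm g)^2 + 2 * (g \<bullet> g') + (norm g')^2"
      unfolding power2_norm_eq_inner by (simp add: inner_add_left inner_add_right inner_commute)
    finally have e2: "g \<bullet> g' \<ge> - (h j + h j')" using G2 G2' by simp
    have "g \<bullet> (X j - snd p) = g \<bullet> (X j - X j') + \<delta> * (g \<bullet> g')"
      unfolding sp by (simp add: inner_diff_right inner_add_right algebra_simps)
    moreover have "\<delta> * (g \<bullet> g') \<ge> \<delta> * (- (h j + h j'))"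
      using e2 dl by (intro mult_left_mono) auto
    ultimately show ?thesis using e1 Suc by (simp add: B_def algebra_simps)
  qed
  have expand: "(norm (W p - \<delta> *\<^sub>R g))^2
      = (norm (W p))^2 - 2 * \<delta> * (1 + \<xi>) * (g \<bullet> (X j - xs)) + 2 * \<delta> * \<xi> * (g \<bullet> (X j - snd p))
        + \<delta>^2 * (norm g)^2"
  proof -
    have "(norm (W p - \<delta> *\<^sub>R g))^2 = (norm (W p))^2 - 2 * \<delta> * (g \<bullet> W p) + \<delta>^2 * (norm g)^2"
      unfolding power2_norm_eq_inner
      by (simp add: inner_diff_left inner_diff_right inner_commute power2_eq_square algebra_simps)
    moreover have "g \<bullet> W p = (1 + \<xi>) * (g \<bullet> (X j - xs)) - \<xi> * (g \<bullet> (X j - snd p))"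
      unfolding Wp by (simp add: inner_diff_right)
    ultimately show ?thesis by (simp add: algebra_simps)
  qed
  have m1: "\<delta> * (1 + \<xi>) * (g \<bullet> (X j - xs)) \<ge> \<delta> * (1 + \<xi>) * (2 * h j)"
    using G1 dl xi by (intro mult_left_mono) auto
  have m2: "\<delta> * \<xi> * (g \<bullet> (X j - snd p)) \<le> \<delta> * \<xi> * B"
    using E dl xi by (intro mult_left_mono_neg) (auto simp: mult_nonneg_nonpos)
  have step: "(norm (W (?st (Suc j))))^2 \<le> (norm (W p))^2 + (2 * \<delta>^2 - 4 * \<delta> * (1 + \<xi>)) * h j + 2 * \<delta> * \<xi> * B"
    unfolding Wstep expand G2 using m1 m2 by (simp add: algebra_simps)
  have IH: "(norm (W p))^2 \<le> (1 + \<xi>)^2 * (norm (x0 - xs))^2 + (\<Sum>i<j. (2 * \<delta>^2 - 4 * \<delta> * (1 + \<xi>)) * h i)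
       + 2 * \<delta> * \<xi> * (\<Sum>i\<in>{1..<j}. (1 - \<delta>) * h i - q i - \<delta> * h (i - 1))"
    using Suc.IH Suc.prems by (simp add: p_def)
  have sum2: "(\<Sum>i\<in>{1..<Suc j}. (1 - \<delta>) * h i - q i - \<delta> * h (i - 1))
      = (\<Sum>i\<in>{1..<j}. (1 - \<delta>) * h i - q i - \<delta> * h (i - 1)) + B"
    by (cases j) (simp_all add: B_def)
  show ?case using step IH sum2 by (simp add: algebra_simps)
qed



lemma sum_1_lessThan_Suc: "(\<Sum>i\<in>{1..<Suc n}. f i) = (\<Sum>i<n. f (Suc i))"
  by (induction n) (simp_all add: sum.atLeastLessThan_Suc)

lemma final_arith:
  fixes \<xi> \<delta> \<mu> d f0 :: real
  assumes "-1 < \<xi>" "\<xi> \<le> 0" "0 < \<delta>" "\<mu> \<ge> 0" "f0 \<ge> 0"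
  shows "(1 + \<xi>)^2 * d^2 - 2 * \<delta> * \<xi> * (1 - \<delta>) * f0
     \<le> (1 + \<xi>) * (1 + \<xi> - 2 * \<delta> * \<xi> * \<mu>) * d^2 + 2 * \<xi> * \<delta> * (\<delta> * \<xi> - \<delta> - 1) * f0"
proof -
  have 1: "0 \<le> (-\<xi>) * (\<delta> * (1 + \<xi>) * \<mu> * d^2)"
    using assms by (intro mult_nonneg_nonneg) auto
  have 2: "0 \<le> (-\<xi>) * (\<delta>^2 * (2 - \<xi>) * f0)"
    using assms by (intro mult_nonneg_nonneg) auto
  show ?thesis using 1 2 by (simp add: algebra_simps power2_eq_square)
qed

theorem theorem5:
  fixes a :: "nat \<Rightarrow> real^'n" and b :: "nat \<Rightarrow> real" and m \<beta> k :: nat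
    and \<xi> \<delta> :: real and x0 :: "real^'n"
  assumes rows_normalized: "\<forall>i<m. norm (a i) = 1"
    and consistent: "feasible_set m a b \<noteq> {}"
    and beta: "1 \<le> \<beta>" "\<beta> \<le> m"
    and k: "1 \<le> k"
    and xi: "-1 < \<xi>" "\<xi> \<le> 0"
    and delta: "0 < \<delta>" "\<delta> < 2 * (1 + \<xi>) / (1 - 2 * \<xi>)"
  shows "measure_pmf.expectation (pmf_of_set (choice_lists m \<beta> (k - 1)))
           (\<lambda>ts. f_obj m \<beta> a b ((1 / real k) *\<^sub>R (\<Sum>l = 1..k. gskm_x a b \<delta> \<xi> x0 ts l)))
         \<le> ((1 + \<xi>) * (1 + \<xi> - 2 * \<delta> * \<xi> * mu2 m \<beta> a) * (infdist x0 (feasible_set m a b))\<^sup>2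
            + 2 * \<xi> * \<delta> * (\<delta> * \<xi> - \<delta> - 1) * f_obj m \<beta> a b x0)
           / (2 * \<delta> * real k * (2 + 2 * \<xi> + 2 * \<delta> * \<xi> - \<delta>))"
proof -
  define S where "S = row_subsets m \<beta>"
  define CL where "CL = choice_lists m \<beta>"
  define st where "st = (\<lambda>ts. foldl (gskm_step a b \<delta> \<xi>) (x0, x0) ts)"
  define X where "X = (\<lambda>ts i. fst (st (take i ts)))"
  define fo where "fo = f_obj m \<beta> a b"
  define A where "A = (\<lambda>i. \<Sum>ts\<in>CL k. fo (X ts i))"
  define D where "D = 2 * \<delta> * (2 + 2 * \<xi> + 2 * \<delta> * \<xi> - \<delta>)"
  obtain k' where kk: "k = Suc k'" using k by (cases k) auto
  have finS: "finite S" unfolding S_def row_subsets_def by (rule finite_subset[of _ "Pow {..<m}"]) auto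
  have "{..<\<beta>} \<in> S" using beta by (auto simp: S_def row_subsets_def)
  then have neS: "S \<noteq> {}" by blast
  have cS: "real (card S) > 0" using neS finS by (simp add: card_gt_0_iff)
  have fo_eq: "fo x = (\<Sum>\<tau>\<in>S. phi a b x \<tau>) / real (card S)" for x
    unfolding fo_def f_obj_def S_def using integral_pmf_of_set[OF neS[unfolded S_def] finS[unfolded S_def]]
    by (simp add: phi_def sum_divide_distrib[symmetric] field_simps)
  have fo_nonneg: "fo x \<ge> 0" for x
    unfolding fo_eq using cS by (intro divide_nonneg_pos sum_nonneg phi_nonneg) auto
  have finCL: "finite (CL n)" for n unfolding CL_def by (rule CL_finite)
  have cardCL: "real (card (CL n)) = real (card S) ^ n" for n by (simp add: CL_def S_def CL_card)
  have neCL: "CL n \<noteq> {}" for n using cardCL[of n] cS by (metis card.empty of_nat_0 power_not_zero less_irrefl)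
  define N where "N = real (card (CL k))"
  have Npos: "N > 0" using cS by (simp add: N_def cardCL)
  have Dpos: "D > 0"
  proof -
    have "0 < 1 - 2 * \<xi>" using xi by simp
    then have "\<delta> * (1 - 2 * \<xi>) < 2 * (1 + \<xi>)" using delta(2) by (simp add: field_simps)
    then have "0 < 2 + 2 * \<xi> + 2 * \<delta> * \<xi> - \<delta>" by (simp add: algebra_simps)
    then show ?thesis using delta(1) unfolding D_def by simp
  qed
  have closedP: "closed (feasible_set m a b)"
  proof -
    have "feasible_set m a b = (\<Inter>i\<in>{..<m}. {x. a i \<bullet> x \<le> b i})"
      by (auto simp: feasible_set_def)
    then show ?thesis by (simp add: closed_INT closed_halfspace_le)
  qed
  obtain xs where xs: "xs \<in> feasible_set m a b" "infdist x0 (feasible_set m a b) = dist x0 xs"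
    using infdist_attains_inf[OF closedP consistent] by blast
  define C0 where "C0 = (1 + \<xi>)^2 * (norm (x0 - xs))^2"
  define c1 where "c1 = 2 * \<delta>^2 - 4 * \<delta> * (1 + \<xi>)"
  define h where "h = (\<lambda>ts i. phi a b (X ts i) (ts ! i))"
  define q where "q = (\<lambda>ts i. phi a b (X ts (i - 1)) (ts ! i))"
  have pw: "0 \<le> C0 + (\<Sum>i<k. c1 * h ts i) + 2 * \<delta> * \<xi> * (\<Sum>i\<in>{1..<k}. (1 - \<delta>) * h ts i - q ts i - \<delta> * h ts (i - 1))"
    if ts: "ts \<in> CL k" for ts
  proof -
    have "ts \<in> choice_lists m \<beta> k" using ts by (simp add: CL_def)
    note P = path[OF rows_normalized xs(1) xi delta(1) beta(1) this, of k x0, OF order_refl]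
    show ?thesis unfolding C0_def c1_def h_def q_def X_def st_def
      by (rule order_trans[OF zero_le_power2 P])
  qed
  have hsum: "(\<Sum>ts\<in>CL k. h ts i) = A i" if "i < k" for i
  proof -
    have "(\<Sum>ts\<in>CL k. h ts i) = (\<Sum>ts\<in>CL k. (\<lambda>\<tau> x. phi a b x \<tau>) (ts ! i) ((\<lambda>p. fst (st p)) (take i ts)))"
      by (simp add: h_def X_def)
    also have "\<dots> = (\<Sum>ts\<in>CL k. (\<Sum>\<tau>\<in>S. phi a b (fst (st (take i ts))) \<tau>) / real (card S))"
      unfolding CL_def S_def by (rule sum_CL_ind[OF that beta(2)])
    finally show ?thesis by (simp add: A_def fo_eq X_def)
  qed
  have qsum: "(\<Sum>ts\<in>CL k. q ts i) = A (i - 1)" if "i < k" for i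
  proof -
    have "(\<Sum>ts\<in>CL k. q ts i) = (\<Sum>ts\<in>CL k. (\<lambda>\<tau> x. phi a b x \<tau>) (ts ! i) ((\<lambda>p. fst (st (take (i - 1) p))) (take i ts)))"
      by (simp add: q_def X_def min_def)
    also have "\<dots> = (\<Sum>ts\<in>CL k. (\<Sum>\<tau>\<in>S. phi a b (fst (st (take (i - 1) (take i ts)))) \<tau>) / real (card S))"
      unfolding CL_def S_def by (rule sum_CL_ind[OF that beta(2)])
    finally show ?thesis by (simp add: A_def fo_eq X_def min_def)
  qed
  have "0 \<le> (\<Sum>ts\<in>CL k. C0 + (\<Sum>i<k. c1 * h ts i) + 2 * \<delta> * \<xi> * (\<Sum>i\<in>{1..<k}. (1 - \<delta>) * h ts i - q ts i - \<delta> * h ts (i - 1)))"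
    using pw by (intro sum_nonneg) auto
  also have "\<dots> = N * C0 + (\<Sum>i<k. c1 * (\<Sum>ts\<in>CL k. h ts i))
       + 2 * \<delta> * \<xi> * (\<Sum>i\<in>{1..<k}. (1 - \<delta>) * (\<Sum>ts\<in>CL k. h ts i) - (\<Sum>ts\<in>CL k. q ts i) - \<delta> * (\<Sum>ts\<in>CL k. h ts (i - 1)))"
  proof -
    have e1: "(\<Sum>ts\<in>CL k. \<Sum>i<k. c1 * h ts i) = (\<Sum>i<k. c1 * (\<Sum>ts\<in>CL k. h ts i))"
      by (simp add: sum_distrib_left sum.swap[of _ "CL k"])
    have e2: "(\<Sum>ts\<in>CL k. 2 * \<delta> * \<xi> * (\<Sum>i\<in>{1..<k}. (1 - \<delta>) * h ts i - q ts i - \<delta> * h ts (i - 1)))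
       = 2 * \<delta> * \<xi> * (\<Sum>i\<in>{1..<k}. \<Sum>ts\<in>CL k. (1 - \<delta>) * h ts i - q ts i - \<delta> * h ts (i - 1))"
      by (simp add: sum_distrib_left[symmetric] sum.swap[of _ "CL k"])
    have e3: "(\<Sum>ts\<in>CL k. (1 - \<delta>) * h ts i - q ts i - \<delta> * h ts (i - 1))
       = (1 - \<delta>) * (\<Sum>ts\<in>CL k. h ts i) - (\<Sum>ts\<in>CL k. q ts i) - \<delta> * (\<Sum>ts\<in>CL k. h ts (i - 1))" for i
      by (simp add: sum_subtractf sum_distrib_left)
    show ?thesis unfolding sum.distrib e1 e2 by (simp only: e3) (simp add: N_def)
  qed
  also have "\<dots> = N * C0 + (\<Sum>i<k. c1 * A i)
       + 2 * \<delta> * \<xi> * (\<Sum>i\<in>{1..<k}. (1 - \<delta>) * A i - A (i - 1) - \<delta> * A (i - 1))"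
  proof -
    have "(\<Sum>i<k. c1 * (\<Sum>ts\<in>CL k. h ts i)) = (\<Sum>i<k. c1 * A i)"
      by (rule sum.cong[OF refl]) (simp add: hsum)
    moreover have "(\<Sum>i\<in>{1..<k}. (1 - \<delta>) * (\<Sum>ts\<in>CL k. h ts i) - (\<Sum>ts\<in>CL k. q ts i) - \<delta> * (\<Sum>ts\<in>CL k. h ts (i - 1)))
        = (\<Sum>i\<in>{1..<k}. (1 - \<delta>) * A i - A (i - 1) - \<delta> * A (i - 1))"
    proof (rule sum.cong[OF refl])
      fix i assume "i \<in> {1..<k}"
      then have "i < k" "i - 1 < k" by auto
      then show "(1 - \<delta>) * (\<Sum>ts\<in>CL k. h ts i) - (\<Sum>ts\<in>CL k. q ts i) - \<delta> * (\<Sum>ts\<in>CL k. h ts (i - 1))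
        = (1 - \<delta>) * A i - A (i - 1) - \<delta> * A (i - 1)" by (simp only: hsum qsum)
    qed
    ultimately show ?thesis by simp
  qed
  finally have main0: "0 \<le> N * C0 + c1 * (\<Sum>i<k. A i)
       + 2 * \<delta> * \<xi> * (\<Sum>i<k'. (1 - \<delta>) * A (Suc i) - (1 + \<delta>) * A i)"
    unfolding kk sum_1_lessThan_Suc by (simp add: sum_distrib_left algebra_simps)
  define T where "T = (\<Sum>i<k. A i)"
  have T1: "(\<Sum>i<k'. A (Suc i)) = T - A 0" unfolding T_def kk sum.lessThan_Suc_shift by simp
  have T2: "(\<Sum>i<k'. A i) = T - A k'" unfolding T_def kk by simp
  have "(\<Sum>i<k'. (1 - \<delta>) * A (Suc i) - (1 + \<delta>) * A i) = (1 - \<delta>) * (T - A 0) - (1 + \<delta>) * (T - A k')"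
    by (simp add: sum_subtractf sum_distrib_left[symmetric] T1 T2)
  with main0 have main1: "0 \<le> N * C0 + c1 * T + 2 * \<delta> * \<xi> * ((1 - \<delta>) * (T - A 0) - (1 + \<delta>) * (T - A k'))"
    by (simp add: T_def)
  have A0: "A 0 = N * fo x0" by (simp add: A_def X_def st_def N_def)
  have Ak: "A k' \<ge> 0" unfolding A_def by (intro sum_nonneg fo_nonneg)
  have "2 * \<delta> * \<xi> * (1 + \<delta>) * A k' \<le> 0"
  proof -
    have "(2 * \<delta> * (1 + \<delta>)) * \<xi> \<le> 0" by (rule mult_nonneg_nonpos) (use delta xi in auto)
    then have "((2 * \<delta> * (1 + \<delta>)) * \<xi>) * A k' \<le> 0" by (rule mult_nonpos_nonneg) (rule Ak)
    then show ?thesis by (simp add: mult_ac)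
  qed
  with main1 have "D * T \<le> N * C0 - 2 * \<delta> * \<xi> * (1 - \<delta>) * A 0"
    by (simp add: D_def c1_def algebra_simps power2_eq_square)
  then have Tb: "T \<le> N * (C0 - 2 * \<delta> * \<xi> * (1 - \<delta>) * fo x0) / D"
    using Dpos by (simp add: A0 field_simps)
  define xl where "xl = (\<lambda>ts l. gskm_x a b \<delta> \<xi> x0 ts l)"
  have jen: "fo ((1 / real k) *\<^sub>R (\<Sum>l = 1..k. xl ts l)) \<le> (1 / real k) * (\<Sum>l = 1..k. fo (xl ts l))" for ts
  proof -
    have "(\<Sum>\<tau>\<in>S. phi a b ((1 / real k) *\<^sub>R (\<Sum>l = 1..k. xl ts l)) \<tau>)
        \<le> (\<Sum>\<tau>\<in>S. (1 / real k) * (\<Sum>l = 1..k. phi a b (xl ts l) \<tau>))"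
      using S_props[OF _ beta(1)] k by (intro sum_mono jensen_phi) (auto simp: S_def)
    also have "\<dots> = (1 / real k) * (\<Sum>l = 1..k. \<Sum>\<tau>\<in>S. phi a b (xl ts l) \<tau>)"
      by (simp add: sum_distrib_left sum.swap[of _ S])
    finally have G0: "(\<Sum>\<tau>\<in>S. phi a b ((1 / real k) *\<^sub>R (\<Sum>l = 1..k. xl ts l)) \<tau>)
        \<le> (1 / real k) * (\<Sum>l = 1..k. \<Sum>\<tau>\<in>S. phi a b (xl ts l) \<tau>)" .
    have G: "(\<Sum>\<tau>\<in>S. phi a b ((1 / real k) *\<^sub>R (\<Sum>l = 1..k. xl ts l)) \<tau>) / real (card S)
        \<le> ((1 / real k) * (\<Sum>l = 1..k. \<Sum>\<tau>\<in>S. phi a b (xl ts l) \<tau>)) / real (card S)"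
      using G0 cS by (intro divide_right_mono) auto
    have R: "(1 / real k) * (\<Sum>l = 1..k. (\<Sum>\<tau>\<in>S. phi a b (xl ts l) \<tau>) / real (card S))
        = ((1 / real k) * (\<Sum>l = 1..k. \<Sum>\<tau>\<in>S. phi a b (xl ts l) \<tau>)) / real (card S)"
      by (simp add: sum_divide_distrib[symmetric])
    show ?thesis unfolding fo_eq R by (rule G)
  qed
  have Ai: "A i = real (card S) * (\<Sum>p\<in>CL k'. fo (xl p (Suc i)))" if "i < k" for i
  proof -
    have "A i = (\<Sum>ts\<in>CL (Suc k'). (\<lambda>p. fo (xl p (Suc i))) (take k' ts))"
      unfolding A_def kk
    proof (rule sum.cong[OF refl])
      fix ts show "fo (X ts i) = (\<lambda>p. fo (xl p (Suc i))) (take k' ts)"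
        using that kk by (simp add: X_def xl_def gskm_x_def st_def min_def)
    qed
    also have "\<dots> = real (card S) * (\<Sum>p\<in>CL k'. fo (xl p (Suc i)))"
      unfolding CL_def S_def by (rule sum_CL_take)
    finally show ?thesis .
  qed
  have LHS: "measure_pmf.expectation (pmf_of_set (CL k'))
           (\<lambda>ts. fo ((1 / real k) *\<^sub>R (\<Sum>l = 1..k. xl ts l)))
       = (\<Sum>ts\<in>CL k'. fo ((1 / real k) *\<^sub>R (\<Sum>l = 1..k. xl ts l))) / real (card (CL k'))"
    by (rule integral_pmf_of_set[OF neCL finCL])
  have "(\<Sum>ts\<in>CL k'. fo ((1 / real k) *\<^sub>R (\<Sum>l = 1..k. xl ts l)))
      \<le> (\<Sum>ts\<in>CL k'. (1 / real k) * (\<Sum>l = 1..k. fo (xl ts l)))"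
    by (intro sum_mono jen)
  also have "\<dots> = (1 / real k) * (\<Sum>i<k. \<Sum>ts\<in>CL k'. fo (xl ts (Suc i)))"
    by (simp add: sum_distrib_left[symmetric] sum.swap[of _ "CL k'"] sum.atLeast1_atMost_eq sum_divide_distrib[symmetric])
  also have "\<dots> = (1 / real k) * (T / real (card S))"
    using Ai cS by (simp add: T_def sum_divide_distrib)
  finally have L1: "(\<Sum>ts\<in>CL k'. fo ((1 / real k) *\<^sub>R (\<Sum>l = 1..k. xl ts l))) \<le> T / (real k * real (card S))"
    by simp
  have NN: "N = real (card S) * real (card (CL k'))" by (simp add: N_def cardCL kk)
  have cCL': "real (card (CL k')) > 0" using cS by (simp add: cardCL)
  have E1: "measure_pmf.expectation (pmf_of_set (CL k'))
           (\<lambda>ts. fo ((1 / real k) *\<^sub>R (\<Sum>l = 1..k. xl ts l))) \<le> T / (real k * N)"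
    unfolding LHS NN using L1 cCL' cS k
    by (simp add: divide_right_mono field_simps)
  also have "\<dots> \<le> (N * (C0 - 2 * \<delta> * \<xi> * (1 - \<delta>) * fo x0) / D) / (real k * N)"
    by (rule divide_right_mono[OF Tb]) (use Npos k in simp)
  also have "\<dots> = (C0 - 2 * \<delta> * \<xi> * (1 - \<delta>) * fo x0) / (real k * D)"
    using Npos k Dpos by (simp add: field_simps)
  also have "\<dots> \<le> ((1 + \<xi>) * (1 + \<xi> - 2 * \<delta> * \<xi> * mu2 m \<beta> a) * (infdist x0 (feasible_set m a b))\<^sup>2
            + 2 * \<xi> * \<delta> * (\<delta> * \<xi> - \<delta> - 1) * fo x0) / (real k * D)"
  proof (rule divide_right_mono)
    show "C0 - 2 * \<delta> * \<xi> * (1 - \<delta>) * fo x0 \<le> (1 + \<xi>) * (1 + \<xi> - 2 * \<delta> * \<xi> * mu2 m \<beta> a) * (infdist x0 (feasible_set m a b))\<^sup>2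
            + 2 * \<xi> * \<delta> * (\<delta> * \<xi> - \<delta> - 1) * fo x0"
      unfolding C0_def xs(2) dist_norm
      by (rule final_arith[OF xi delta(1) mu2_nonneg fo_nonneg])
    show "0 \<le> real k * D" using Dpos by simp
  qed
  finally show ?thesis
    unfolding CL_def fo_def xl_def D_def kk by (simp add: algebra_simps)
qed

end
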